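(* Let $k$ be a positive integer and $G_1,\dots,G_m$ finite subgraphs of $\mathsf{Path}_{\mathbb Z}$ with $G_1\cup\dots\cup G_m=\mathsf{Path}_k$ and $\vec\Delta(G_1,\dots,G_m)=1$. Then there exists a shift permutation $\sigma$ of $[m]$ such that \[\vec\lambda(G_{\sigma(1)},\dots,G_{\sigma(m)})\ge\frac{k}{8}-\frac{\max\{\lambda(G_1),\dots,\lambda(G_m)\}}{2}\] and \[\vec\Delta(G_{\tilde\sigma_j(1)},\dots,G_{\tilde\sigma_j(m)})\ge\frac{\vec\Delta(G_1,\dots,G_m)}{2}\quad\text{for all }j\in[m].\]
   Context: Graphs are finite simple graphs without isolated vertices; $\emptyset$ is the empty graph. $\mathsf{Path}_{\mathbb Z}$ has vertex set $\mathbb Z$ and edges $\{i-1,i\}$; $\mathsf{Path}_k$ has vertices $0,\dots,k$ and edges $\{i-1,i\}$, $1\le i\le k$. $\Delta(G)$ = number of connected components; $\lambda(G)$ = maximum number of edges in a component ($0$ for $\emptyset$); $G\ominus F$ = union of components of $G$ sharing no vertex with $F$. With $H_l=G_l\ominus(G_1\cup\dots\cup G_{l-1})$: $\vec\Delta(G_1,\dots,G_m)=\sum_l\Delta(H_l)$, $\vec\lambda(G_1,\dots,G_m)=\sum_l\lambda(H_l)$ (applied to reordered sequences accordingly). Shift permutation: a permutation $\sigma$ of $[m]$ with $\sigma(j)\ge j-1$ for all $j$. For $I\subseteq[m]$ with $m\in I$, $I=\{i_1<\dots<i_p\}$, $i_0:=0$, let $\sigma_I(j)=i_h$ if $j=i_{h-1}+1$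 for some $h$, and $\sigma_I(j)=j-1$ otherwise; every shift permutation is $\sigma_I$ for exactly one such $I$. For $\sigma=\sigma_I$ and $j\in[m]$, $\tilde\sigma_j:=\sigma_{\tilde I_j}$ with $\tilde I_j=I\cup[i_{h-1}]$ if $j=i_h\in I$ and $\tilde I_j=I\cup[j-1]$ if $j\notin I$. *)

theory Defs
  imports Complex_Main "HOL-Combinatorics.Permutations"
begin

text \<open>A subgraph of Path_Z without isolated vertices is determined by its edge set.
  We encode it as a set E of integers: i \<in> E means the edge {i-1,i} is present.
  Path_k is {1..k}.\<close>

definition pverts :: "int set \<Rightarrow> int set" where
  "pverts E = {v. v \<in> E \<or> v + 1 \<in> E}"

definition pcomp :: "int set \<Rightarrow> int \<Rightarrow> int set" where
  "pcomp E i = {j. \<forall>t. min i j \<le> t \<and> t \<le> max i j \<longrightarrow> t \<in> E}"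

definition pcomponents :: "int set \<Rightarrow> int set set" where
  "pcomponents E = pcomp E ` E"

definition pDelta :: "int set \<Rightarrow> nat" where
  "pDelta E = card (pcomponents E)"

definition pLambda :: "int set \<Rightarrow> nat" where
  "pLambda E = Max (insert 0 (card ` pcomponents E))"

definition pminus :: "int set \<Rightarrow> int set \<Rightarrow> int set" where
  "pminus G F = \<Union> {C \<in> pcomponents G. pverts C \<inter> pverts F = {}}"

text \<open>Sequences G_1..G_m are functions nat \<Rightarrow> int set on indices 1..m.\<close>
definition Hseq :: "(nat \<Rightarrow> int set) \<Rightarrow> nat \<Rightarrow> int set" where
  "Hseq G l = pminus (G l) (\<Union> j\<in>{1..<l}. G j)"

definition vecDelta :: "nat \<Rightarrow> (nat \<Rightarrow> int set) \<Rightarrow> nat" where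
  "vecDelta m G = (\<Sum> l = 1..m. pDelta (Hseq G l))"

definition vecLambda :: "nat \<Rightarrow> (nat \<Rightarrow> int set) \<Rightarrow> nat" where
  "vecLambda m G = (\<Sum> l = 1..m. pLambda (Hseq G l))"

definition shift_perm :: "nat \<Rightarrow> (nat \<Rightarrow> nat) \<Rightarrow> bool" where
  "shift_perm m \<sigma> \<longleftrightarrow> \<sigma> permutes {1..m} \<and> (\<forall>j\<in>{1..m}. \<sigma> j \<ge> j - 1)"

text \<open>\<sigma>_I for I \<subseteq> [m] with m \<in> I, I = {i_1<...<i_p}, i_0 = 0:
  \<sigma>_I(j) = i_h if j = i_{h-1}+1 (i.e. j-1 \<in> {0} \<union> I, and i_h is the least element of I that is \<ge> j),
  otherwise j-1; identity outside [m].\<close>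
definition sigmaI :: "nat \<Rightarrow> nat set \<Rightarrow> nat \<Rightarrow> nat" where
  "sigmaI m I j = (if j \<in> {1..m} then
      (if j - 1 \<in> insert 0 I then (LEAST i. i \<in> I \<and> j \<le> i) else j - 1)
    else j)"

text \<open>\<tilde>I_j: if j = i_h \<in> I then I \<union> [i_{h-1}] (i_{h-1} the largest element of {0} \<union> I below j),
  otherwise I \<union> [j-1].\<close>
definition tildeI :: "nat set \<Rightarrow> nat \<Rightarrow> nat set" where
  "tildeI I j = (if j \<in> I then I \<union> {1..(GREATEST i. i \<in> insert 0 I \<and> i < j)}
                 else I \<union> {1..j - 1})"

end

theory Submission
  imports Defs
begin


lemma sigmaI_into:
  assumes "I \<subseteq> {1..n}" "n \<in> I" "j \<in> {1..n}"
  shows "sigmaI n I j \<in> {1..n}"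
proof (cases "j - 1 \<in> insert 0 I")
  case True
  have "(LEAST i. i \<in> I \<and> j \<le> i) \<in> I"
    using LeastI[of "\<lambda>i. i \<in> I \<and> j \<le> i" n] assms by auto
  then show ?thesis using assms True by (auto simp: sigmaI_def)
next
  case False
  then show ?thesis using assms by (auto simp: sigmaI_def)
qed

lemma sigmaI_ge:
  assumes "I \<subseteq> {1..n}" "n \<in> I" "j \<in> {1..n}"
  shows "sigmaI n I j \<ge> j - 1"
proof (cases "j - 1 \<in> insert 0 I")
  case True
  have "j \<le> (LEAST i. i \<in> I \<and> j \<le> i)"
    using LeastI[of "\<lambda>i. i \<in> I \<and> j \<le> i" n] assms by auto
  then show ?thesis using assms True by (auto simp: sigmaI_def)
next
  case False
  then show ?thesis using assms by (auto simp: sigmaI_def)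
qed

lemma sigmaI_onto:
  assumes "I \<subseteq> {1..n}" "n \<in> I" "i \<in> {1..n}"
  shows "i \<in> sigmaI n I ` {1..n}"
proof (cases "i \<in> I")
  case True
  define g where "g = Max {x \<in> insert 0 I. x < i}"
  have fin: "finite {x \<in> insert 0 I. x < i}" by auto
  have ne: "0 \<in> {x \<in> insert 0 I. x < i}" using assms by auto
  have g1: "g \<in> insert 0 I" "g < i" using Max_in[OF fin] ne unfolding g_def by blast+
  have g2: "\<And>x. x \<in> I \<Longrightarrow> x < i \<Longrightarrow> x \<le> g" unfolding g_def using fin by (auto intro: Max_ge)
  have L: "(LEAST x. x \<in> I \<and> Suc g \<le> x) = i"
  proof (rule Least_equality)
    show "i \<in> I \<and> Suc g \<le> i" using True g1 by auto
    fix y assume "y \<in> I \<and> Suc g \<le> y"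
    then show "i \<le> y" using g2[of y] by (cases "y < i") auto
  qed
  have "sigmaI n I (Suc g) = i" using g1 L assms True by (auto simp: sigmaI_def)
  moreover have "Suc g \<in> {1..n}" using g1 assms by auto
  ultimately show ?thesis by force
next
  case False
  then have "i < n" using assms by (cases "i = n") auto
  then have "sigmaI n I (Suc i) = i" using False assms by (auto simp: sigmaI_def)
  moreover have "Suc i \<in> {1..n}" using \<open>i < n\<close> by auto
  ultimately show ?thesis by force
qed

lemma sigmaI_perm:
  assumes "I \<subseteq> {1..n}" "n \<in> I"
  shows "sigmaI n I permutes {1..n}"
proof (rule inj_imp_permutes)
  show "inj_on (sigmaI n I) {1..n}"
    by (rule finite_surj_inj) (use sigmaI_onto[OF assms] in auto)
  show "finite {1..n}" by simp
  show "\<And>x. x \<in> {1..n} \<Longrightarrow> sigmaI n I x \<in> {1..n}" using sigmaI_into[OF assms] by auto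
  show "\<And>i. i \<notin> {1..n} \<Longrightarrow> sigmaI n I i = i" unfolding sigmaI_def by presburger
qed

lemma sigmaI_perm0:
  assumes "I \<subseteq> {1..n}" "0 < n \<longrightarrow> n \<in> I"
  shows "sigmaI n I permutes {1..n}"
proof (cases "n = 0")
  case True
  then show ?thesis by (simp add: sigmaI_def permutes_def)
qed (use sigmaI_perm assms in auto)

lemma tildeI_ok:
  assumes "I \<subseteq> {1..m}" "m \<in> I" "j \<in> {1..m}"
  shows "tildeI I j \<subseteq> {1..m} \<and> m \<in> tildeI I j"
proof (cases "j \<in> I")
  case True
  have "(GREATEST i. i \<in> insert 0 I \<and> i < j) < j"
    using GreatestI_nat[of "\<lambda>i. i \<in> insert 0 I \<and> i < j" 0 j] assms by auto
  then show ?thesis using assms True by (auto simp: tildeI_def)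
next
  case False
  then show ?thesis using assms by (auto simp: tildeI_def)
qed

lemma pcomp_sub: "pcomp E i \<subseteq> E"
proof
  fix j assume "j \<in> pcomp E i"
  then have "\<forall>t. min i j \<le> t \<and> t \<le> max i j \<longrightarrow> t \<in> E" unfolding pcomp_def by simp
  then show "j \<in> E" by (metis min.cobounded2 max.cobounded2)
qed

lemma pcomp_self: "i \<in> E \<Longrightarrow> i \<in> pcomp E i"
  unfolding pcomp_def by auto

lemma pcomp_interval: "{c..d} \<subseteq> E \<Longrightarrow> {c..d} \<subseteq> pcomp E d"
  unfolding pcomp_def by (auto simp: subset_iff)

lemma finite_pcomponents: "finite E \<Longrightarrow> finite (pcomponents E)"
  unfolding pcomponents_def by simp

lemma pminus_sub: "pminus E F \<subseteq> E"
  unfolding pminus_def pcomponents_def using pcomp_sub by blast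
lemma comp_in_pminus:
  assumes "i \<in> E" "pverts (pcomp E i) \<inter> pverts F = {}"
  shows "pcomp E i \<subseteq> pminus E F"
proof -
  have "pcomp E i \<in> {C \<in> pcomponents E. pverts C \<inter> pverts F = {}}"
    using assms unfolding pcomponents_def by simp
  then show ?thesis unfolding pminus_def by (rule Union_upper)
qed
lemma pminus_empty: "pminus E {} = E"
proof
  show "pminus E {} \<subseteq> E" by (rule pminus_sub)
  show "E \<subseteq> pminus E {}"
  proof
    fix i assume i: "i \<in> E"
    have "pverts {} = {}" by (simp add: pverts_def)
    then have "pcomp E i \<subseteq> pminus E {}" using comp_in_pminus[OF i] by simp
    then show "i \<in> pminus E {}" using pcomp_self[OF i] by blast
  qed
qed

lemma pminus_emptyset: "pminus {} F = {}"
  unfolding pminus_def pcomponents_def by simp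
lemma pDelta_pos: "finite E \<Longrightarrow> E \<noteq> {} \<Longrightarrow> pDelta E \<ge> 1"
  unfolding pDelta_def pcomponents_def
  by (simp add: Suc_le_eq card_gt_0_iff)

lemma pDelta_zero: "finite E \<Longrightarrow> pDelta E = 0 \<Longrightarrow> E = {}"
  unfolding pDelta_def pcomponents_def by simp

lemma pLambda_ge_card: "finite E \<Longrightarrow> i \<in> E \<Longrightarrow> card (pcomp E i) \<le> pLambda E"
  unfolding pLambda_def
  by (rule Max_ge) (auto simp: finite_pcomponents pcomponents_def)

lemma pLambda_ge:
  assumes "finite E" "c \<le> d" "{c..d} \<subseteq> E"
  shows "int (pLambda E) \<ge> d - c + 1"
proof -
  have "d \<in> E" using assms by auto
  have "card {c..d} \<le> card (pcomp E d)"
  proof (rule card_mono)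
    show "finite (pcomp E d)" using pcomp_sub[of E d] assms(1) finite_subset by blast
    show "{c..d} \<subseteq> pcomp E d" using pcomp_interval[OF assms(3)] .
  qed
  also have "\<dots> \<le> pLambda E" using pLambda_ge_card[OF assms(1) \<open>d \<in> E\<close>] .
  finally have h: "card {c..d} \<le> pLambda E" .
  have "int (card {c..d}) = d - c + 1" using assms(2) by simp
  then show ?thesis using h by linarith
qed

lemma W_right:
  assumes "finite E" "c \<le> d" "{c..d} \<subseteq> E"
    and H: "\<forall>j\<le>d. {j..d} \<subseteq> E \<longrightarrow> (\<forall>e\<in>F. e + 1 < j)"
  shows "int (pLambda (pminus E F)) \<ge> d - c + 1"
proof -
  have dE: "d \<in> E" using assms by auto
  have allgt: "\<forall>x\<in>pcomp E d. \<forall>e\<in>F. e + 1 < x"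
  proof (intro ballI)
    fix x e assume x: "x \<in> pcomp E d" and e: "e \<in> F"
    show "e + 1 < x"
    proof (cases "x \<le> d")
      case True
      have "{x..d} \<subseteq> E" using x True unfolding pcomp_def by auto
      then show ?thesis using H True e by auto
    next
      case False
      have "e + 1 < c" using H assms(2,3) e by auto
      then show ?thesis using False assms(2) by auto
    qed
  qed
  have "pverts (pcomp E d) \<inter> pverts F = {}"
  proof (rule ccontr)
    assume "pverts (pcomp E d) \<inter> pverts F \<noteq> {}"
    then obtain v where v1: "v \<in> pcomp E d \<or> v + 1 \<in> pcomp E d" and v2: "v \<in> F \<or> v + 1 \<in> F"
      unfolding pverts_def by auto
    from v1 obtain x where x: "x \<in> pcomp E d" "x \<le> v + 1" by auto
    from v2 obtain e where e: "e \<in> F" "v \<le> e" by auto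
    from allgt x e show False by force
  qed
  then have "{c..d} \<subseteq> pminus E F"
    using comp_in_pminus[OF dE] pcomp_interval[OF assms(3)] by blast
  moreover have "finite (pminus E F)" using pminus_sub assms(1) finite_subset by blast
  ultimately show ?thesis using pLambda_ge assms(2) by blast
qed

lemma W_left:
  assumes "finite E" "c \<le> d" "{c..d} \<subseteq> E"
    and H: "\<forall>j\<ge>c. {c..j} \<subseteq> E \<longrightarrow> (\<forall>e\<in>F. j + 1 < e)"
  shows "int (pLambda (pminus E F)) \<ge> d - c + 1"
proof -
  have cE: "c \<in> E" using assms by auto
  have allgt: "\<forall>x\<in>pcomp E c. \<forall>e\<in>F. x + 1 < e"
  proof (intro ballI)
    fix x e assume x: "x \<in> pcomp E c" and e: "e \<in> F"
    show "x + 1 < e"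
    proof (cases "x \<ge> c")
      case True
      have "{c..x} \<subseteq> E" using x True unfolding pcomp_def by auto
      then show ?thesis using H True e by auto
    next
      case False
      have "d + 1 < e" using H assms(2,3) e by auto
      then show ?thesis using False assms(2) by auto
    qed
  qed
  have "pverts (pcomp E c) \<inter> pverts F = {}"
  proof (rule ccontr)
    assume "pverts (pcomp E c) \<inter> pverts F \<noteq> {}"
    then obtain v where v1: "v \<in> pcomp E c \<or> v + 1 \<in> pcomp E c" and v2: "v \<in> F \<or> v + 1 \<in> F"
      unfolding pverts_def by auto
    from v1 obtain x where x: "x \<in> pcomp E c" "v \<le> x" by auto
    from v2 obtain e where e: "e \<in> F" "e \<le> v + 1" by auto
    from allgt x e show False by force
  qed
  moreover have "{c..d} \<subseteq> pcomp E c"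
    using assms(3) unfolding pcomp_def by (auto simp: subset_iff)
  ultimately have "{c..d} \<subseteq> pminus E F"
    using comp_in_pminus[OF cE] by blast
  moreover have "finite (pminus E F)" using pminus_sub assms(1) finite_subset by blast
  ultimately show ?thesis using pLambda_ge assms(2) by blast
qed

definition Uu :: "(nat \<Rightarrow> int set) \<Rightarrow> nat \<Rightarrow> int set" where
  "Uu G a = (\<Union> j\<in>{1..a}. G j)"

inductive Ach :: "(nat \<Rightarrow> nat \<Rightarrow> nat) \<Rightarrow> nat \<Rightarrow> nat \<Rightarrow> nat \<Rightarrow> bool"
  for w :: "nat \<Rightarrow> nat \<Rightarrow> nat" and m :: nat where
  Ach_z: "Ach w m 0 0"
| Ach_s: "Ach w m a v \<Longrightarrow> a < b \<Longrightarrow> b \<le> m \<Longrightarrow> Ach w m b (v + w a b)"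
| Ach_d: "Ach w m a v \<Longrightarrow> v' \<le> v \<Longrightarrow> Ach w m a v'"

lemma Ach_le: "Ach w m a v \<Longrightarrow> a \<le> m"
  by (induction rule: Ach.induct) auto

lemma core:
  fixes G :: "nat \<Rightarrow> int set" and w :: "nat \<Rightarrow> nat \<Rightarrow> nat" and m l0 :: nat
  assumes fin: "\<forall>j\<in>{1..m}. finite (G j)"
    and l0: "1 \<le> l0" "l0 \<le> m" "Uu G l0 \<noteq> {}"
    and intv: "\<forall>a x y t. l0 \<le> a \<longrightarrow> a \<le> m \<longrightarrow> x \<in> Uu G a \<longrightarrow> y \<in> Uu G a \<longrightarrow> x \<le> t \<longrightarrow> t \<le> y \<longrightarrow> t \<in> Uu G a"
    and W: "\<forall>p r c d. p < r \<longrightarrow> r \<le> m \<longrightarrow> c \<le> d \<longrightarrow> {c..d} \<subseteq> G r \<longrightarrow>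
              (\<forall>j\<le>d. {j..d} \<subseteq> G r \<longrightarrow> (\<forall>e\<in>Uu G p. e + 1 < j)) \<longrightarrow> d - c + 1 \<le> int (w p r)"
  shows "\<exists>t v. t \<le> m \<and> Ach w m t v \<and> Max (Uu G m) - Max (Uu G l0) \<le> 2 * int v"
proof -
  define B where "B a = Max (Uu G a)" for a
  have finU: "a \<le> m \<Longrightarrow> finite (Uu G a)" for a using fin unfolding Uu_def by auto
  have Umono: "a \<le> b \<Longrightarrow> Uu G a \<subseteq> Uu G b" for a b unfolding Uu_def by (rule UN_mono) auto
  have neU: "l0 \<le> a \<Longrightarrow> Uu G a \<noteq> {}" for a using l0(3) Umono by blast
  have BinU: "l0 \<le> a \<Longrightarrow> a \<le> m \<Longrightarrow> B a \<in> Uu G a" for a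
    unfolding B_def using finU neU Max_in by blast
  have Bge: "a \<le> m \<Longrightarrow> e \<in> Uu G a \<Longrightarrow> e \<le> B a" for a e
    unfolding B_def using finU Max_ge by blast
  have monoB: "l0 \<le> a \<Longrightarrow> a \<le> b \<Longrightarrow> b \<le> m \<Longrightarrow> B a \<le> B b" for a b
    using BinU[of a] Umono[of a b] Bge[of b] by auto
  have USuc: "Uu G (Suc a) = Uu G a \<union> G (Suc a)" for a
    unfolding Uu_def by (auto simp: atLeastAtMostSuc_conv)
  have U0: "Uu G 0 = {}" unfolding Uu_def by simp
  define P where "P e l \<longleftrightarrow> l0 \<le> l \<and> l \<le> m \<and> e \<le> B l \<and> {e..B l} \<subseteq> G l" for e l
  have exP: "\<exists>l. P e l" if e: "B l0 < e" "e \<le> B m" for e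
  proof -
    define l where "l = (LEAST l. l0 \<le> l \<and> e \<le> B l)"
    have lP: "l0 \<le> l \<and> e \<le> B l" unfolding l_def by (rule LeastI[of _ m]) (use e l0 in auto)
    have lm: "l \<le> m" unfolding l_def by (rule Least_le) (use e l0 in auto)
    have "l \<noteq> l0" using lP e by auto
    then obtain l' where l': "l = Suc l'" "l0 \<le> l'" using lP by (cases l) auto
    have nl: "\<not> (e \<le> B l')"
    proof
      assume "e \<le> B l'"
      then have "l \<le> l'" unfolding l_def using l' by (auto intro: Least_le)
      then show False using l' by auto
    qed
    have "{e..B l} \<subseteq> G l"
    proof
      fix t assume t: "t \<in> {e..B l}"
      have x: "B l0 \<in> Uu G l" using BinU[of l0] Umono[of l0 l] lP l0 by auto
      have y: "B l \<in> Uu G l" using BinU[of l] lP lm by auto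
      have "t \<in> Uu G l" using intv[rule_format, of l "B l0" "B l" t] x y t e lP lm l0 by auto
      moreover have "t \<notin> Uu G l'" using Bge[of l' t] nl t lm l' by auto
      ultimately show "t \<in> G l" using USuc[of l'] l' by auto
    qed
    then show ?thesis using lP lm unfolding P_def by blast
  qed
  have grP: "P e (GREATEST l. P e l) \<and> (\<forall>l. P e l \<longrightarrow> l \<le> (GREATEST l. P e l))"
    if ex: "\<exists>l. P e l" for e
  proof -
    obtain l where "P e l" using ex by blast
    moreover have "\<And>y. P e y \<Longrightarrow> y \<le> m" unfolding P_def by auto
    ultimately show ?thesis using GreatestI_nat[of "P e"] Greatest_le_nat[of "P e"] by blast
  qed
  have key: "\<forall>p q vp vq. nat (B m - B q) = n \<longrightarrow> l0 \<le> p \<longrightarrow> p \<le> q \<longrightarrow> q \<le> m \<longrightarrow> B p \<le> B q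
      \<longrightarrow> Ach w m p vp \<longrightarrow> Ach w m q vq \<longrightarrow> B q - B l0 \<le> int vp + int vq
      \<longrightarrow> (\<forall>l. P (B p + 1) l \<longrightarrow> l \<le> q)
      \<longrightarrow> (\<exists>t v. t \<le> m \<and> Ach w m t v \<and> B m - B l0 \<le> 2 * int v)" for n
  proof (induction n rule: less_induct)
    case (less n)
    show ?case
    proof (intro allI impI)
      fix p q vp vq
      assume H: "nat (B m - B q) = n" "l0 \<le> p" "p \<le> q" "q \<le> m" "B p \<le> B q"
        "Ach w m p vp" "Ach w m q vq" "B q - B l0 \<le> int vp + int vq"
        "\<forall>l. P (B p + 1) l \<longrightarrow> l \<le> q"
      show "\<exists>t v. t \<le> m \<and> Ach w m t v \<and> B m - B l0 \<le> 2 * int v"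
      proof (cases "B m \<le> B q")
        case True
        show ?thesis
        proof (cases "vp \<le> vq")
          case True
          then show ?thesis using H \<open>B m \<le> B q\<close> by (intro exI[of _ q] exI[of _ vq]) auto
        next
          case False
          then show ?thesis using H \<open>B m \<le> B q\<close> by (intro exI[of _ p] exI[of _ vp]) auto
        qed
      next
        case False
        define e where "e = B q + 1"
        have Bl0p: "B l0 \<le> B p" using monoB[of l0 p] H by auto
        have "\<exists>l. P e l" using exP[of e] e_def Bl0p H False by auto
        then obtain r where r: "P e r" "\<forall>l. P e l \<longrightarrow> l \<le> r" using grP by blast
        have rr: "l0 \<le> r" "r \<le> m" "e \<le> B r" "{e..B r} \<subseteq> G r" using r(1) unfolding P_def by auto
        have "B q < B r" using rr e_def by auto
        have qr: "q < r"
        proof (rule ccontr)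
          assume "\<not> q < r"
          then have "B r \<le> B q" using monoB[of r q] rr H by auto
          then show False using \<open>B q < B r\<close> by auto
        qed
        have cond: "\<forall>j\<le>B r. {j..B r} \<subseteq> G r \<longrightarrow> (\<forall>e'\<in>Uu G p. e' + 1 < j)"
        proof (intro allI impI ballI)
          fix j e' assume j: "j \<le> B r" "{j..B r} \<subseteq> G r" and e': "e' \<in> Uu G p"
          show "e' + 1 < j"
          proof (rule ccontr)
            assume "\<not> e' + 1 < j"
            moreover have "e' \<le> B p" using Bge[of p e'] e' H by auto
            ultimately have "{B p + 1..B r} \<subseteq> G r" using j by auto
            moreover have "B p + 1 \<le> B r" using H \<open>B q < B r\<close> by auto
            ultimately have "P (B p + 1) r" using rr unfolding P_def by auto
            then have "r \<le> q" using H(9) by auto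
            then show False using qr by auto
          qed
        qed
        have "B r - e + 1 \<le> int (w p r)"
          using W[rule_format, of p r e "B r"] rr cond H qr by auto
        then have wpr: "B r - B q \<le> int (w p r)" using e_def by auto
        have Ar: "Ach w m r (vp + w p r)" by (rule Ach_s) (use H qr rr in auto)
        have lt: "nat (B m - B r) < n" using H False \<open>B q < B r\<close> by auto
        have "\<forall>p' q' vp' vq'. nat (B m - B q') = nat (B m - B r) \<longrightarrow> l0 \<le> p' \<longrightarrow> p' \<le> q' \<longrightarrow> q' \<le> m \<longrightarrow> B p' \<le> B q'
          \<longrightarrow> Ach w m p' vp' \<longrightarrow> Ach w m q' vq' \<longrightarrow> B q' - B l0 \<le> int vp' + int vq'
          \<longrightarrow> (\<forall>l. P (B p' + 1) l \<longrightarrow> l \<le> q')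
          \<longrightarrow> (\<exists>t v. t \<le> m \<and> Ach w m t v \<and> B m - B l0 \<le> 2 * int v)"
          using less lt by blast
        then show ?thesis
          apply (rule allE[of _ q])
          apply (erule allE[of _ r])
          apply (erule allE[of _ vq])
          apply (erule allE[of _ "vp + w p r"])
          using H qr rr Ar \<open>B q < B r\<close> wpr r(2) e_def by auto
      qed
    qed
  qed
  have A0: "Ach w m l0 0"
    using Ach_d[OF Ach_s[OF Ach_z, of l0]] l0 by auto
  have "\<exists>t v. t \<le> m \<and> Ach w m t v \<and> B m - B l0 \<le> 2 * int v"
  proof (cases "B m \<le> B l0")
    case True
    then show ?thesis using A0 l0 by (intro exI[of _ l0] exI[of _ 0]) auto
  next
    case False
    define e where "e = B l0 + 1"
    have "\<exists>l. P e l" using exP[of e] e_def False by auto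
    then obtain q where q: "P e q" "\<forall>l. P e l \<longrightarrow> l \<le> q" using grP by blast
    have qq: "l0 \<le> q" "q \<le> m" "e \<le> B q" "{e..B q} \<subseteq> G q" using q(1) unfolding P_def by auto
    have "B q - e + 1 \<le> int (w 0 q)"
      using W[rule_format, of 0 q e "B q"] qq l0 U0 by auto
    then have wq: "B q - B l0 \<le> int (w 0 q)" using e_def by auto
    have Aq: "Ach w m q (0 + w 0 q)" by (rule Ach_s[OF Ach_z]) (use qq l0 in auto)
    have "B l0 \<le> B q" using qq e_def by auto
    show ?thesis
      by (rule key[of "nat (B m - B q)", THEN spec[of _ l0], THEN spec[of _ q], THEN spec[of _ 0], THEN spec[of _ "w 0 q"], rule_format])
        (use A0 Aq qq wq q(2) e_def l0 \<open>B l0 \<le> B q\<close> in auto)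
  qed
  then show ?thesis unfolding B_def by simp
qed


lemma sigma_agree:
  assumes I: "I \<subseteq> {1..a}" "a \<in> I" "a < b" "j \<in> {1..a}"
  shows "sigmaI b (insert b I) j = sigmaI a I j"
proof -
  have L: "(LEAST i. i \<in> insert b I \<and> j \<le> i) = (LEAST i. i \<in> I \<and> j \<le> i)"
  proof (rule Least_equality)
    have "(LEAST i. i \<in> I \<and> j \<le> i) \<in> I \<and> j \<le> (LEAST i. i \<in> I \<and> j \<le> i)"
      by (rule LeastI[of _ a]) (use I in auto)
    then show "(LEAST i. i \<in> I \<and> j \<le> i) \<in> insert b I \<and> j \<le> (LEAST i. i \<in> I \<and> j \<le> i)" by auto
    fix y assume y: "y \<in> insert b I \<and> j \<le> y"
    show "(LEAST i. i \<in> I \<and> j \<le> i) \<le> y"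
    proof (cases "y = b")
      case True
      have "(LEAST i. i \<in> I \<and> j \<le> i) \<le> a" by (rule Least_le) (use I in auto)
      then show ?thesis using True I by auto
    next
      case False
      then show ?thesis using y by (auto intro: Least_le)
    qed
  qed
  have "j - 1 \<in> insert 0 (insert b I) \<longleftrightarrow> j - 1 \<in> insert 0 I" using I by auto
  moreover have "j \<in> {1..b}" "j \<in> {1..a}" using I by auto
  ultimately show ?thesis unfolding sigmaI_def L by simp
qed

lemma sigma_next:
  assumes I: "I \<subseteq> {1..a}" "0 < a \<longrightarrow> a \<in> I" "a < b"
  shows "sigmaI b (insert b I) (Suc a) = b"
proof -
  have L: "(LEAST i. i \<in> insert b I \<and> Suc a \<le> i) = b"
    by (rule Least_equality) (use I in auto)
  have "a \<in> insert 0 (insert b I)" using I by (cases "a = 0") auto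
  then show ?thesis unfolding sigmaI_def L using I by auto
qed

lemma Ach_I:
  assumes "Ach w m t v" and wdef: "\<forall>a b. w a b = pLambda (pminus (G b) (Uu G a))"
  shows "\<exists>I. I \<subseteq> {1..t} \<and> (0 < t \<longrightarrow> t \<in> I) \<and> v \<le> (\<Sum>l = 1..t. pLambda (Hseq (G \<circ> sigmaI t I) l))"
  using assms(1)
proof induction
  case Ach_z
  then show ?case by (intro exI[of _ "{}"]) auto
next
  case (Ach_d a v v')
  then show ?case using le_trans by blast
next
  case (Ach_s a v b)
  then obtain I where I: "I \<subseteq> {1..a}" "0 < a \<longrightarrow> a \<in> I"
    and v: "v \<le> (\<Sum>l = 1..a. pLambda (Hseq (G \<circ> sigmaI a I) l))" by blast
  define I' where "I' = insert b I"
  define s where "s = sigmaI a I"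
  define s' where "s' = sigmaI b I'"
  have agree: "\<forall>j\<in>{1..a}. s' j = s j"
  proof
    fix j assume j: "j \<in> {1..a}"
    then have "0 < a" by auto
    then show "s' j = s j" unfolding s'_def s_def I'_def using sigma_agree[OF I(1) _ Ach_s(2) j] I(2) by auto
  qed
  have nxt: "s' (Suc a) = b" unfolding s'_def I'_def using sigma_next[OF I Ach_s(2)] .
  have Hag: "Hseq (G \<circ> s') l = Hseq (G \<circ> s) l" if l: "l \<in> {1..a}" for l
  proof -
    have "(\<Union> j\<in>{1..<l}. (G \<circ> s') j) = (\<Union> j\<in>{1..<l}. (G \<circ> s) j)"
      by (rule SUP_cong) (use agree l in auto)
    moreover have "(G \<circ> s') l = (G \<circ> s) l" using agree l by auto
    ultimately show ?thesis unfolding Hseq_def by simp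
  qed
  have perm: "s permutes {1..a}" unfolding s_def by (rule sigmaI_perm0) (use I in auto)
  have "(\<Union> j\<in>{1..<Suc a}. (G \<circ> s') j) = (\<Union> j\<in>{1..a}. G (s j))"
    by (rule SUP_cong) (use agree in auto)
  also have "\<dots> = (\<Union> i\<in>s ` {1..a}. G i)" by simp
  also have "\<dots> = Uu G a" unfolding Uu_def permutes_image[OF perm] ..
  finally have Hn: "Hseq (G \<circ> s') (Suc a) = pminus (G b) (Uu G a)"
    unfolding Hseq_def using nxt by simp
  define f' where "f' l = pLambda (Hseq (G \<circ> s') l)" for l
  have "v + w a b \<le> (\<Sum>l = 1..a. f' l) + f' (Suc a)"
    using v Hag wdef Hn unfolding f'_def s_def by simp
  also have "\<dots> = (\<Sum>l = 1..Suc a. f' l)" by simp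
  also have "\<dots> \<le> (\<Sum>l = 1..b. f' l)"
    by (rule sum_mono2) (use Ach_s in auto)
  finally have "v + w a b \<le> (\<Sum>l = 1..b. pLambda (Hseq (G \<circ> sigmaI b I') l))"
    unfolding f'_def s'_def .
  moreover have "I' \<subseteq> {1..b}" "0 < b \<longrightarrow> b \<in> I'" using I Ach_s unfolding I'_def by auto
  ultimately show ?case by blast
qed



lemma pDelta1_interval:
  assumes "pDelta E = 1"
  shows "\<forall>x y t. x \<in> E \<longrightarrow> y \<in> E \<longrightarrow> x \<le> t \<longrightarrow> t \<le> y \<longrightarrow> t \<in> E"
proof (intro allI impI)
  fix x y t assume xy: "x \<in> E" "y \<in> E" "x \<le> t" "t \<le> y"
  have "card (pcomp E ` E) = 1" using assms unfolding pDelta_def pcomponents_def .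
  then obtain C where C: "pcomp E ` E = {C}" by (rule card_1_singletonE)
  have "pcomp E x = pcomp E y" using C xy by (metis image_eqI singletonD)
  then have "y \<in> pcomp E x" using pcomp_self[OF xy(2)] by simp
  then show "t \<in> E" using xy unfolding pcomp_def by auto
qed


lemma union_interval:
  assumes intvA: "\<forall>x y t. x\<in>A \<longrightarrow> y\<in>A \<longrightarrow> x \<le> t \<longrightarrow> t \<le> y \<longrightarrow> t \<in> A" and ne: "A \<noteq> {}"
    and touch: "\<forall>i\<in>E. pverts (pcomp E i) \<inter> pverts A \<noteq> {}"
  shows "\<forall>x y t. x \<in> A \<union> E \<longrightarrow> y \<in> A \<union> E \<longrightarrow> x \<le> t \<longrightarrow> t \<le> y \<longrightarrow> t \<in> A \<union> E"
proof (intro allI impI)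
  fix x y t :: int assume xy: "x \<in> A \<union> E" "y \<in> A \<union> E" "x \<le> t" "t \<le> y"
  show "t \<in> A \<union> E"
  proof (rule ccontr)
    assume nt: "t \<notin> A \<union> E"
    obtain u where u: "u \<in> A" using ne by blast
    show False
    proof (cases "u < t")
      case True
      have Alt: "\<forall>u'\<in>A. u' < t"
      proof
        fix u' assume u': "u' \<in> A"
        show "u' < t"
        proof (rule ccontr)
          assume "\<not> u' < t"
          then have "t \<le> u'" by simp
          then have "t \<in> A" using intvA[rule_format, of u u' t] u u' True by auto
          then show False using nt by auto
        qed
      qed
      have "y \<noteq> t" using xy nt by auto
      then have "t < y" using xy by auto
      then have yE: "y \<in> E" using xy Alt by auto
      have Cgt: "\<forall>x'\<in>pcomp E y. t < x'"
      proof
        fix x' assume x': "x' \<in> pcomp E y"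
        show "t < x'"
        proof (rule ccontr)
          assume "\<not> t < x'"
          then have "min y x' \<le> t \<and> t \<le> max y x'" using \<open>t < y\<close> by auto
          then have "t \<in> E" using x' unfolding pcomp_def by auto
          then show False using nt by auto
        qed
      qed
      obtain v where v1: "v \<in> pcomp E y \<or> v + 1 \<in> pcomp E y" and v2: "v \<in> A \<or> v + 1 \<in> A"
        using touch yE unfolding pverts_def by blast
      from v1 have "t \<le> v" using Cgt[rule_format, of v] Cgt[rule_format, of "v+1"] by linarith
      moreover from v2 have "v < t" using Alt[rule_format, of v] Alt[rule_format, of "v+1"] by linarith
      ultimately show False by simp
    next
      case False
      then have "t < u" using nt u by (cases "t = u") auto
      have Agt: "\<forall>u'\<in>A. t < u'"
      proof
        fix u' assume u': "u' \<in> A"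
        show "t < u'"
        proof (rule ccontr)
          assume "\<not> t < u'"
          then have "u' \<le> t" by simp
          then have "t \<in> A" using intvA[rule_format, of u' u t] u u' \<open>t < u\<close> by auto
          then show False using nt by auto
        qed
      qed
      have "x \<noteq> t" using xy nt by auto
      then have "x < t" using xy by auto
      then have xE: "x \<in> E" using xy Agt by auto
      have Clt: "\<forall>x'\<in>pcomp E x. x' < t"
      proof
        fix x' assume x': "x' \<in> pcomp E x"
        show "x' < t"
        proof (rule ccontr)
          assume "\<not> x' < t"
          then have "min x x' \<le> t \<and> t \<le> max x x'" using \<open>x < t\<close> by auto
          then have "t \<in> E" using x' unfolding pcomp_def by auto
          then show False using nt by auto
        qed
      qed
      obtain v where v1: "v \<in> pcomp E x \<or> v + 1 \<in> pcomp E x" and v2: "v \<in> A \<or> v + 1 \<in> A"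
        using touch xE unfolding pverts_def by blast
      from v1 have "v < t" using Clt[rule_format, of v] Clt[rule_format, of "v+1"] by linarith
      moreover from v2 have "t \<le> v" using Agt[rule_format, of v] Agt[rule_format, of "v+1"] by linarith
      ultimately show False by simp
    qed
  qed
qed


lemma Max_refl:
  fixes S :: "int set"
  assumes "finite S" "S \<noteq> {}"
  shows "Max ((\<lambda>e. 1 - e) ` S) = 1 - Min S"
proof (rule Max_eqI)
  show "finite ((\<lambda>e. 1 - e) ` S)" using assms by simp
  fix y assume "y \<in> (\<lambda>e. 1 - e) ` S"
  then obtain s where s: "s \<in> S" "y = 1 - s" by blast
  have "Min S \<le> s" using Min_le[OF assms(1) s(1)] .
  then show "y \<le> 1 - Min S" using s by simp
next
  have "Min S \<in> S" using Min_in[OF assms] .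
  then show "1 - Min S \<in> (\<lambda>e. 1 - e) ` S" by (rule imageI)
qed

lemma vecDelta_perm_pos:
  assumes s: "s permutes {1..m}" and fin: "\<forall>j\<in>{1..m}. finite (G j)"
    and i: "i \<in> {1..m}" "G i \<noteq> {}"
  shows "vecDelta m (G \<circ> s) \<ge> 1"
proof -
  have img: "s ` {1..m} = {1..m}" using permutes_image[OF s] .
  then obtain l' where l': "l' \<in> {1..m}" "s l' = i" using i by (metis imageE)
  define l where "l = (LEAST l. l \<in> {1..m} \<and> G (s l) \<noteq> {})"
  have lP: "l \<in> {1..m} \<and> G (s l) \<noteq> {}" unfolding l_def by (rule LeastI[of _ l']) (use l' i in auto)
  have before: "G (s j) = {}" if "j \<in> {1..<l}" for j
  proof -
    have "j < l" "j \<in> {1..m}" using that lP by auto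
    then show ?thesis using not_less_Least[of j "\<lambda>l. l \<in> {1..m} \<and> G (s l) \<noteq> {}"] unfolding l_def by auto
  qed
  have "(\<Union> j\<in>{1..<l}. (G \<circ> s) j) = {}" using before by auto
  then have H: "Hseq (G \<circ> s) l = G (s l)" unfolding Hseq_def by (simp add: pminus_empty)
  have "s l \<in> {1..m}" using img lP by auto
  then have "pDelta (G (s l)) \<ge> 1" using pDelta_pos fin lP by auto
  also have "pDelta (G (s l)) \<le> vecDelta m (G \<circ> s)"
    unfolding vecDelta_def using H lP by (metis finite_atLeastAtMost member_le_sum zero_le)
  finally show ?thesis .
qed




theorem lemma5p6:
  fixes k m :: nat and G :: "nat \<Rightarrow> int set"
  assumes "k > 0"
    and "\<forall>j\<in>{1..m}. finite (G j)"
    and "(\<Union> j\<in>{1..m}. G j) = {1..int k}"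
    and "vecDelta m G = 1"
  shows "\<exists>\<sigma> I. I \<subseteq> {1..m} \<and> m \<in> I \<and> \<sigma> = sigmaI m I \<and> shift_perm m \<sigma>
           \<and> real (vecLambda m (G \<circ> \<sigma>))
               \<ge> real k / 8 - real (Max (pLambda ` G ` {1..m})) / 2
           \<and> (\<forall>j\<in>{1..m}. real (vecDelta m (G \<circ> sigmaI m (tildeI I j)))
                           \<ge> real (vecDelta m G) / 2)"
proof -
  note fin = assms(2)
  have Um: "Uu G m = {1..int k}" using assms(3) unfolding Uu_def .
  have "1 \<in> Uu G m" using Um assms(1) by auto
  then obtain j1 where j1: "j1 \<in> {1..m}" "1 \<in> G j1" unfolding Uu_def by blast
  define l0 where "l0 = (LEAST l. 1 \<le> l \<and> l \<le> m \<and> G l \<noteq> {})"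
  have l0P: "1 \<le> l0 \<and> l0 \<le> m \<and> G l0 \<noteq> {}"
    unfolding l0_def by (rule LeastI[of _ j1]) (use j1 in auto)
  have before: "G j = {}" if "1 \<le> j" "j < l0" for j
  proof -
    have "j \<le> m" using that l0P by auto
    then show ?thesis using not_less_Least[of j "\<lambda>l. 1 \<le> l \<and> l \<le> m \<and> G l \<noteq> {}"] that
      unfolding l0_def by auto
  qed
  have USuc: "Uu G (Suc a) = Uu G a \<union> G (Suc a)" for a
    unfolding Uu_def by (auto simp: atLeastAtMostSuc_conv)
  have Ubefore: "Uu G (l0 - 1) = {}" unfolding Uu_def using before by auto
  have Ul0: "Uu G l0 = G l0" using USuc[of "l0 - 1"] Ubefore l0P by auto
  have Hs: "Hseq G l = pminus (G l) (Uu G (l - 1))" if "1 \<le> l" for l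
  proof -
    have "{1..<l} = {1..l-1}" using that by auto
    then show ?thesis unfolding Hseq_def Uu_def by simp
  qed
  define f where "f l = pDelta (Hseq G l)" for l
  have fl0: "f l0 = pDelta (G l0)" unfolding f_def using Hs[of l0] l0P Ubefore by (simp add: pminus_empty)
  have fl0ge: "f l0 \<ge> 1" using fl0 pDelta_pos fin l0P by auto
  have sumf: "(\<Sum>l = 1..m. f l) = 1" using assms(4) unfolding vecDelta_def f_def .
  have fother: "f l = 0" if "l \<in> {1..m}" "l \<noteq> l0" for l
  proof -
    have "(\<Sum>x \<in> {l0, l}. f x) \<le> (\<Sum>l = 1..m. f l)"
      by (rule sum_mono2) (use that l0P in auto)
    then have "f l0 + f l \<le> 1" using that sumf by simp
    then show ?thesis using fl0ge by simp
  qed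
  have fl01: "pDelta (G l0) = 1"
  proof -
    have "(\<Sum>x \<in> {l0}. f x) \<le> (\<Sum>l = 1..m. f l)"
      by (rule sum_mono2) (use l0P in auto)
    then show ?thesis using sumf fl0ge fl0 by simp
  qed
  have finU: "a \<le> m \<Longrightarrow> finite (Uu G a)" for a using fin unfolding Uu_def by auto
  have Umono: "a \<le> b \<Longrightarrow> Uu G a \<subseteq> Uu G b" for a b unfolding Uu_def by (rule SUP_mono) auto
  have touch: "\<forall>i\<in>G (Suc a). pverts (pcomp (G (Suc a)) i) \<inter> pverts (Uu G a) \<noteq> {}"
    if a: "l0 \<le> a" "a < m" for a
  proof
    fix i assume i: "i \<in> G (Suc a)"
    have "f (Suc a) = 0" using fother[of "Suc a"] a by auto
    moreover have "finite (Hseq G (Suc a))"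
    proof -
      have "finite (G (Suc a))" using fin a by auto
      then show ?thesis using Hs[of "Suc a"] finite_subset[OF pminus_sub] by simp
    qed
    ultimately have "Hseq G (Suc a) = {}" unfolding f_def using pDelta_zero by blast
    then have emp: "pminus (G (Suc a)) (Uu G a) = {}" using Hs[of "Suc a"] by simp
    show "pverts (pcomp (G (Suc a)) i) \<inter> pverts (Uu G a) \<noteq> {}"
    proof
      assume "pverts (pcomp (G (Suc a)) i) \<inter> pverts (Uu G a) = {}"
      then have "pcomp (G (Suc a)) i \<subseteq> {}" using comp_in_pminus[OF i, of "Uu G a"] emp by simp
      then show False using pcomp_self[OF i] by auto
    qed
  qed
  have intvU: "\<forall>x y t. x \<in> Uu G a \<longrightarrow> y \<in> Uu G a \<longrightarrow> x \<le> t \<longrightarrow> t \<le> y \<longrightarrow> t \<in> Uu G a"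
    if "l0 \<le> a" "a \<le> m" for a
    using that
  proof (induction a)
    case 0
    then have False using l0P by simp
    then show ?case ..
  next
    case (Suc a)
    show ?case
    proof (cases "Suc a = l0")
      case True
      show ?thesis unfolding True Ul0 by (rule pDelta1_interval[OF fl01])
    next
      case False
      then have a: "l0 \<le> a" "a < m" using Suc.prems by auto
      have IH: "\<forall>x y t. x \<in> Uu G a \<longrightarrow> y \<in> Uu G a \<longrightarrow> x \<le> t \<longrightarrow> t \<le> y \<longrightarrow> t \<in> Uu G a"
        by (rule Suc.IH[OF a(1) less_imp_le[OF a(2)]])
      have ne: "Uu G a \<noteq> {}" using Umono[of l0 a] Ul0 l0P a by auto
      show ?thesis unfolding USuc[of a] by (rule union_interval[OF IH ne touch[OF a]])
    qed
  qed
  define w where "w a b = pLambda (pminus (G b) (Uu G a))" for a b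
  have l0ne: "Uu G l0 \<noteq> {}" using Ul0 l0P by auto
  have l0b: "1 \<le> l0" "l0 \<le> m" using l0P by auto
  have WR: "\<forall>p r c d. p < r \<longrightarrow> r \<le> m \<longrightarrow> c \<le> d \<longrightarrow> {c..d} \<subseteq> G r \<longrightarrow>
      (\<forall>j\<le>d. {j..d} \<subseteq> G r \<longrightarrow> (\<forall>e\<in>Uu G p. e + 1 < j)) \<longrightarrow> d - c + 1 \<le> int (w p r)"
  proof (intro allI impI)
    fix p r c d assume h: "p < r" "r \<le> m" "c \<le> d" "{c..d} \<subseteq> G r"
      "\<forall>j\<le>d. {j..d} \<subseteq> G r \<longrightarrow> (\<forall>e\<in>Uu G p. e + 1 < j)"
    have "finite (G r)" using fin h by auto
    then show "d - c + 1 \<le> int (w p r)" unfolding w_def by (rule W_right[OF _ h(3) h(4) h(5)])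
  qed
  have intvAll: "\<forall>a x y t. l0 \<le> a \<longrightarrow> a \<le> m \<longrightarrow> x \<in> Uu G a \<longrightarrow> y \<in> Uu G a \<longrightarrow> x \<le> t \<longrightarrow> t \<le> y \<longrightarrow> t \<in> Uu G a"
  proof (intro allI impI)
    fix a x y t assume h: "l0 \<le> a" "a \<le> m" "x \<in> Uu G a" "y \<in> Uu G a" "x \<le> t" "t \<le> y"
    show "t \<in> Uu G a" by (rule intvU[OF h(1,2), rule_format, OF h(3,4,5,6)])
  qed
  obtain t1 v1 where R: "t1 \<le> m" "Ach w m t1 v1" "Max (Uu G m) - Max (Uu G l0) \<le> 2 * int v1"
    using core[OF fin l0b l0ne intvAll WR] by blast
  define G' where "G' j = (\<lambda>e. 1 - e) ` G j" for j
  have U': "Uu G' a = (\<lambda>e. 1 - e) ` Uu G a" for a unfolding Uu_def G'_def by (simp add: image_UN)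
  have fin': "\<forall>j\<in>{1..m}. finite (G' j)" using fin unfolding G'_def by auto
  have l0ne': "Uu G' l0 \<noteq> {}" using l0ne U' by auto
  have refl: "(1::int) - (1 - x) = x" for x by simp
  have intv': "\<forall>a x y t. l0 \<le> a \<longrightarrow> a \<le> m \<longrightarrow> x \<in> Uu G' a \<longrightarrow> y \<in> Uu G' a \<longrightarrow> x \<le> t \<longrightarrow> t \<le> y \<longrightarrow> t \<in> Uu G' a"
  proof (intro allI impI)
    fix a x y t assume h: "l0 \<le> a" "a \<le> m" "x \<in> Uu G' a" "y \<in> Uu G' a" "x \<le> t" "t \<le> y"
    have "1 - x \<in> Uu G a" "1 - y \<in> Uu G a" using h(3,4) unfolding U' by auto
    then have "1 - t \<in> Uu G a" using intvU[OF h(1,2), rule_format, of "1 - y" "1 - x" "1 - t"] h by auto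
    then have "1 - (1 - t) \<in> Uu G' a" unfolding U' by (rule imageI)
    then show "t \<in> Uu G' a" by simp
  qed
  have WL: "\<forall>p r c d. p < r \<longrightarrow> r \<le> m \<longrightarrow> c \<le> d \<longrightarrow> {c..d} \<subseteq> G' r \<longrightarrow>
      (\<forall>j\<le>d. {j..d} \<subseteq> G' r \<longrightarrow> (\<forall>e\<in>Uu G' p. e + 1 < j)) \<longrightarrow> d - c + 1 \<le> int (w p r)"
  proof (intro allI impI)
    fix p r c d assume h: "p < r" "r \<le> m" "c \<le> d" "{c..d} \<subseteq> G' r"
      and H: "\<forall>j\<le>d. {j..d} \<subseteq> G' r \<longrightarrow> (\<forall>e\<in>Uu G' p. e + 1 < j)"
    have finr: "finite (G r)" using fin h by auto
    have memb: "s \<in> G r" if sm: "1 - s \<in> G' r" for s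
    proof -
      obtain u where "u \<in> G r" "1 - s = 1 - u" using sm unfolding G'_def by blast
      then show ?thesis by simp
    qed
    have memb2: "1 - s \<in> G' r" if "s \<in> G r" for s unfolding G'_def using that by (rule imageI)
    have sub: "{1 - d..1 - c} \<subseteq> G r"
    proof
      fix t assume "t \<in> {1 - d..1 - c}"
      then have "1 - t \<in> {c..d}" by auto
      then show "t \<in> G r" using h(4) memb by auto
    qed
    have HL: "\<forall>j\<ge>1 - d. {1 - d..j} \<subseteq> G r \<longrightarrow> (\<forall>e\<in>Uu G p. j + 1 < e)"
    proof (intro allI impI ballI)
      fix j e assume j: "1 - d \<le> j" "{1 - d..j} \<subseteq> G r" and e: "e \<in> Uu G p"
      have "{1 - j..d} \<subseteq> G' r"
      proof
        fix t assume "t \<in> {1 - j..d}"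
        then have "1 - t \<in> {1 - d..j}" by auto
        then have "1 - t \<in> G r" using j by auto
        then have "1 - (1 - t) \<in> G' r" by (rule memb2)
        then show "t \<in> G' r" by simp
      qed
      moreover have "1 - j \<le> d" using j by auto
      moreover have "1 - e \<in> Uu G' p" unfolding U' using e by (rule imageI)
      ultimately have "1 - e + 1 < 1 - j" using H[rule_format, of "1 - j" "1 - e"] by blast
      then show "j + 1 < e" by simp
    qed
    have "(1 - c) - (1 - d) + 1 \<le> int (pLambda (pminus (G r) (Uu G p)))"
      by (rule W_left[OF finr _ sub HL]) (use h in auto)
    then show "d - c + 1 \<le> int (w p r)" unfolding w_def by simp
  qed
  have wL: "w a b = pLambda (pminus (G b) (Uu G a))" for a b unfolding w_def ..
  obtain t2 v2 where L: "t2 \<le> m" "Ach w m t2 v2" "Max (Uu G' m) - Max (Uu G' l0) \<le> 2 * int v2"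
    using core[OF fin' l0b l0ne' intv' WL] by blast
  define A0 where "A0 = Min (Uu G l0)"
  define B0 where "B0 = Max (Uu G l0)"
  have finl0: "finite (Uu G l0)" using finU l0P by auto
  have A0in: "A0 \<in> Uu G l0" "B0 \<in> Uu G l0" unfolding A0_def B0_def using finl0 l0ne by auto
  have "A0 \<le> B0" unfolding B0_def using Max_ge[OF finl0 A0in(1)] .
  have sub0: "{A0..B0} \<subseteq> G l0"
  proof
    fix t assume "t \<in> {A0..B0}"
    then have "t \<in> Uu G l0" using intvU[OF order.refl l0b(2), rule_format, of A0 B0 t] A0in by auto
    then show "t \<in> G l0" using Ul0 by simp
  qed
  have lam0: "B0 - A0 + 1 \<le> int (pLambda (G l0))"
    using pLambda_ge[OF _ \<open>A0 \<le> B0\<close> sub0] fin l0P by auto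
  define M where "M = Max (pLambda ` G ` {1..m})"
  have "pLambda (G l0) \<le> M" unfolding M_def by (rule Max_ge) (use l0P in auto)
  then have lamM: "B0 - A0 + 1 \<le> int M" using lam0 by linarith
  have MaxUm: "Max (Uu G m) = int k" unfolding Um by (rule Max_eqI) (use assms(1) in auto)
  have MaxUm': "Max (Uu G' m) = 0"
  proof -
    have "Max (Uu G' m) = 1 - Min (Uu G m)" unfolding U' by (rule Max_refl) (use Um assms(1) in auto)
    also have "Min (Uu G m) = 1" unfolding Um by (rule Min_eqI) (use assms(1) in auto)
    finally show ?thesis by simp
  qed
  have MaxUl0': "Max (Uu G' l0) = 1 - A0" unfolding U' A0_def by (rule Max_refl[OF finl0 l0ne])
  have ineqR: "int k - B0 \<le> 2 * int v1" using R(3) MaxUm B0_def by simp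
  have ineqL: "A0 - 1 \<le> 2 * int v2" using L(3) MaxUm' MaxUl0' by simp
  obtain t v where tv: "t \<le> m" "Ach w m t v" "v1 \<le> v" "v2 \<le> v"
  proof (cases "v1 \<le> v2")
    case True then show ?thesis using that[of t2 v2] L by auto
  next
    case False then show ?thesis using that[of t1 v1] R by auto
  qed
  have m0: "0 < m" using l0P by auto
  have Am: "Ach w m m v"
  proof (cases "t = m")
    case True then show ?thesis using tv by simp
  next
    case False
    then have "t < m" using tv by auto
    from Ach_s[OF tv(2) this order.refl] show ?thesis by (rule Ach_d) simp
  qed
  obtain I where I: "I \<subseteq> {1..m}" "m \<in> I" "v \<le> (\<Sum>l = 1..m. pLambda (Hseq (G \<circ> sigmaI m I) l))"
  proof -
    have wAll: "\<forall>a b. w a b = pLambda (pminus (G b) (Uu G a))" unfolding w_def by simp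
    from Ach_I[OF Am wAll] obtain I where "I \<subseteq> {1..m}" "0 < m \<longrightarrow> m \<in> I"
      "v \<le> (\<Sum>l = 1..m. pLambda (Hseq (G \<circ> sigmaI m I) l))" by blast
    then show ?thesis using that m0 by blast
  qed
  have vL: "v \<le> vecLambda m (G \<circ> sigmaI m I)" using I(3) unfolding vecLambda_def .
  have "4 * int v \<ge> int k - int M" using ineqR ineqL lamM tv(3,4) by linarith
  then have "real_of_int (int k - int M) \<le> real_of_int (4 * int v)" by (simp only: of_int_le_iff)
  then have "4 * real v \<ge> real k - real M" by simp
  then have bound: "real (vecLambda m (G \<circ> sigmaI m I)) \<ge> real k / 8 - real M / 2"
  proof -
    have "real v \<le> real (vecLambda m (G \<circ> sigmaI m I))" using vL by simp
    moreover have "real M \<ge> 0" by simp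
    ultimately show ?thesis using \<open>4 * real v \<ge> real k - real M\<close> by linarith
  qed
  have perm: "sigmaI m I permutes {1..m}" using sigmaI_perm[OF I(1,2)] .
  have shift: "shift_perm m (sigmaI m I)"
    unfolding shift_perm_def using perm sigmaI_ge[OF I(1,2)] by auto
  have tl: "\<forall>j\<in>{1..m}. real (vecDelta m (G \<circ> sigmaI m (tildeI I j))) \<ge> real (vecDelta m G) / 2"
  proof
    fix j assume j: "j \<in> {1..m}"
    have "tildeI I j \<subseteq> {1..m} \<and> m \<in> tildeI I j" using tildeI_ok[OF I(1,2) j] .
    then have "sigmaI m (tildeI I j) permutes {1..m}" using sigmaI_perm by blast
    then have "vecDelta m (G \<circ> sigmaI m (tildeI I j)) \<ge> 1"
      by (rule vecDelta_perm_pos[OF _ fin, of _ l0]) (use l0P in auto)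
    then show "real (vecDelta m (G \<circ> sigmaI m (tildeI I j))) \<ge> real (vecDelta m G) / 2"
      using assms(4) by simp
  qed
  show ?thesis using I(1,2) shift bound tl unfolding M_def by blast
qed


end
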